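(* Let $O$, $A$, $\mathcal A_O$ be as in the context, and let $\Omega=\{\omega_1,\dots,\omega_N\}\subseteq A^m$. Let $R$ be a matrix over $O$ whose rows generate the left submodule $\bigcap_{i=1}^N\ker(\kappa_{\omega_i})\subseteq O^{1\times m}$. Then $\{g\in\mathcal A_O^m:R\bullet g=0\}$ is the VMPUM of $\Omega$: it contains $\Omega$, and it is contained in $\{g\in\mathcal A_O^m:R'\bullet g=0\}$ for every matrix $R'\in O^{r'\times m}$ with $R'\bullet\omega_i=0$ for all $i$.
   Context: Let $K$ be a field, $A=K[t_1,\dots,t_n]$, and $O=A[\partial_1;\sigma_1,\delta_1]\cdots[\partial_s;\sigma_s,\delta_s]$ a left Noetherian Ore algebra (iterated Ore extension with commuting $\partial_i$, commuting $\sigma_i,\delta_j$, injective $K$-algebra endomorphisms $\sigma_i$ and $\sigma_i$-derivations $\delta_i$ preserving $A$, $\sigma_i(\partial_j)=\partial_j$, $\delta_i(\partial_j)=0$; multiplication via $\partial_ia=\sigma_i(a)\partial_i+\delta_i(a)$). $A$ is a left $O$-module via $\partial_i\bullet p=\delta_i(p)$, $a\bullet p=ap$. $\mathcal A_O$ is a $K$-vector space of functions with a left $O$-module structure containing $A$ as an $O$-submodule. For $R\in O^{r\times m}$, $(R\bullet g)_i=\sum_jR_{ij}\bullet g_j$. For $p\in A^m$, $\ker(\kappa_p)=\{o\in O^{1\times m}:\sum_io_i\bullet p_i=0\}$ (the kernel of $[o_1,\dots,o_m]\mapsto\sum_io_i[p_i]\in O/{}_O\langle\partial_1,\dots,\partial_s\rangle$).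 A behavior is a set $\{g\in\mathcal A_O^m:R\bullet g=0\}$; the VMPUM of $\Omega$ is a behavior containing $\Omega$ and contained in every behavior containing $\Omega$. *)

theory Defs
  imports Main
begin

text \<open>The Ore algebra O is a (not necessarily commutative) ring
  type 'o; the function space is a set F of elements of an additive group 'f,
  with a left O-action act (written o \<bullet> f in the paper); A is an O-submodule of F.
  Vectors of length m are functions nat \<Rightarrow> _ (only indices j < m matter / are nonzero),
  matrices with r rows are functions nat \<Rightarrow> nat \<Rightarrow> 'o (entries i < r, j < m).\<close>

definition left_module_on :: "('o::ring_1 \<Rightarrow> 'f::ab_group_add \<Rightarrow> 'f) \<Rightarrow> 'f set \<Rightarrow> bool" where
  "left_module_on act F \<longleftrightarrow>
     0 \<in> F \<and> (\<forall>f\<in>F. \<forall>g\<in>F. f + g \<in> F) \<and> (\<forall>f\<in>F. - f \<in> F) \<and>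
     (\<forall>a f. f \<in> F \<longrightarrow> act a f \<in> F) \<and>
     (\<forall>a b f. f \<in> F \<longrightarrow> act (a + b) f = act a f + act b f) \<and>
     (\<forall>a f g. f \<in> F \<longrightarrow> g \<in> F \<longrightarrow> act a (f + g) = act a f + act a g) \<and>
     (\<forall>a b f. f \<in> F \<longrightarrow> act (a * b) f = act a (act b f)) \<and>
     (\<forall>f. f \<in> F \<longrightarrow> act 1 f = f)"

definition submodule_on :: "('o::ring_1 \<Rightarrow> 'f::ab_group_add \<Rightarrow> 'f) \<Rightarrow> 'f set \<Rightarrow> 'f set \<Rightarrow> bool" where
  "submodule_on act A F \<longleftrightarrow> A \<subseteq> F \<and> left_module_on act A"

definition rowvecs :: "nat \<Rightarrow> (nat \<Rightarrow> 'o::zero) set" where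
  "rowvecs m = {v. \<forall>j\<ge>m. v j = 0}"

definition vecs_in :: "'f::zero set \<Rightarrow> nat \<Rightarrow> (nat \<Rightarrow> 'f) set" where
  "vecs_in S m = {g. (\<forall>j<m. g j \<in> S) \<and> (\<forall>j\<ge>m. g j = 0)}"

definition row_span :: "(nat \<Rightarrow> nat \<Rightarrow> 'o::ring_1) \<Rightarrow> nat \<Rightarrow> nat \<Rightarrow> (nat \<Rightarrow> 'o) set" where
  "row_span R r m = {v \<in> rowvecs m. \<exists>c. \<forall>j<m. v j = (\<Sum>k<r. c k * R k j)}"

definition kappa_ker :: "('o::ring_1 \<Rightarrow> 'f::ab_group_add \<Rightarrow> 'f) \<Rightarrow> nat \<Rightarrow> (nat \<Rightarrow> 'f) \<Rightarrow> (nat \<Rightarrow> 'o) set" where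
  "kappa_ker act m p = {v \<in> rowvecs m. (\<Sum>j<m. act (v j) (p j)) = 0}"

definition behavior :: "('o::ring_1 \<Rightarrow> 'f::ab_group_add \<Rightarrow> 'f) \<Rightarrow> 'f set \<Rightarrow> nat \<Rightarrow>
    (nat \<Rightarrow> nat \<Rightarrow> 'o) \<Rightarrow> nat \<Rightarrow> (nat \<Rightarrow> 'f) set" where
  "behavior act F m R r = {g \<in> vecs_in F m. \<forall>i<r. (\<Sum>j<m. act (R i j) (g j)) = 0}"

definition is_behavior :: "('o::ring_1 \<Rightarrow> 'f::ab_group_add \<Rightarrow> 'f) \<Rightarrow> 'f set \<Rightarrow> nat \<Rightarrow>
    (nat \<Rightarrow> 'f) set \<Rightarrow> bool" where
  "is_behavior act F m B \<longleftrightarrow> (\<exists>R r. B = behavior act F m R r)"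

definition is_VMPUM :: "('o::ring_1 \<Rightarrow> 'f::ab_group_add \<Rightarrow> 'f) \<Rightarrow> 'f set \<Rightarrow> nat \<Rightarrow>
    (nat \<Rightarrow> 'f) set \<Rightarrow> (nat \<Rightarrow> 'f) set \<Rightarrow> bool" where
  "is_VMPUM act F m B \<Omega> \<longleftrightarrow> is_behavior act F m B \<and> \<Omega> \<subseteq> B \<and>
     (\<forall>B'. is_behavior act F m B' \<and> \<Omega> \<subseteq> B' \<longrightarrow> B \<subseteq> B')"

end

theory Submission
  imports Defs
begin

lemma lm_zero: "left_module_on act F \<Longrightarrow> 0 \<in> F" unfolding left_module_on_def by (elim conjE)
lemma lm_add: "left_module_on act F \<Longrightarrow> f \<in> F \<Longrightarrow> g \<in> F \<Longrightarrow> f + g \<in> F"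
  unfolding left_module_on_def by (elim conjE) (erule ballE, erule ballE, assumption, simp, simp)
lemma lm_act: "left_module_on act F \<Longrightarrow> f \<in> F \<Longrightarrow> act a f \<in> F"
  unfolding left_module_on_def by (elim conjE allE impE) (assumption)+
lemma lm_ldist: "left_module_on act F \<Longrightarrow> f \<in> F \<Longrightarrow> act (a + b) f = act a f + act b f"
  unfolding left_module_on_def by (elim conjE) (erule allE[of _ a], erule allE[of _ b], erule allE[of _ f], erule impE, assumption, assumption)
lemma lm_rdist: "left_module_on act F \<Longrightarrow> f \<in> F \<Longrightarrow> g \<in> F \<Longrightarrow> act a (f + g) = act a f + act a g"
  unfolding left_module_on_def by (elim conjE) (erule allE[of _ a], erule allE[of _ f], erule allE[of _ g], erule impE, assumption, erule impE, assumption, assumption)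
lemma lm_mult: "left_module_on act F \<Longrightarrow> f \<in> F \<Longrightarrow> act (a * b) f = act a (act b f)"
  unfolding left_module_on_def by (elim conjE) (erule allE[of _ a], erule allE[of _ b], erule allE[of _ f], erule impE, assumption, assumption)

lemma act_zero_right:
  assumes "left_module_on act F" "f \<in> F"
  shows "act a 0 = 0"
proof -
  have z: "0 \<in> F" using lm_zero[OF assms(1)] .
  have "act a (0 + 0) = act a 0 + act a 0" using lm_rdist[OF assms(1) z z] .
  hence "act a 0 = act a 0 + act a 0" unfolding add_0_right .
  thus ?thesis by (rule add_cancel_right_right[THEN iffD1])
qed

lemma act_zero_left:
  assumes "left_module_on act F" "f \<in> F"
  shows "act 0 f = 0"
proof -
  have "act (0 + 0) f = act 0 f + act 0 f" using lm_ldist[OF assms] .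
  hence "act 0 f = act 0 f + act 0 f" unfolding add_0_right .
  thus ?thesis by (rule add_cancel_right_right[THEN iffD1])
qed

lemma act_sum_left:
  assumes "left_module_on act F" "f \<in> F"
  shows "act (\<Sum>k\<in>K. c k) f = (\<Sum>k\<in>K. act (c k) f)"
proof (induction K rule: infinite_finite_induct)
  case (infinite A) then show ?case using act_zero_left[OF assms] by simp
next
  case empty then show ?case using act_zero_left[OF assms] by simp
next
  case (insert x A)
  have "act (\<Sum>k\<in>insert x A. c k) f = act (c x + (\<Sum>k\<in>A. c k)) f" using insert.hyps by simp
  also have "\<dots> = act (c x) f + act (\<Sum>k\<in>A. c k) f" by (rule lm_ldist[OF assms])
  finally show ?case using insert by simp
qed

lemma sum_in_aux:
  assumes "left_module_on act F"
  shows "(\<forall>k\<in>K. h k \<in> F) \<longrightarrow> sum h K \<in> F"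
proof (induction K rule: infinite_finite_induct)
  case (infinite A) then show ?case using lm_zero[OF assms(1)] by simp
next
  case empty then show ?case using lm_zero[OF assms(1)] by simp
next
  case (insert x A)
  show ?case
  proof
    assume H: "\<forall>k\<in>insert x A. h k \<in> F"
    hence "sum h A \<in> F" using insert.IH by blast
    moreover have "h x \<in> F" using H by blast
    ultimately have "h x + sum h A \<in> F" using lm_add[OF assms(1)] by blast
    thus "sum h (insert x A) \<in> F" using insert.hyps by simp
  qed
qed

lemma sum_in:
  assumes "left_module_on act F" "\<And>k. k \<in> K \<Longrightarrow> h k \<in> F"
  shows "(\<Sum>k\<in>K. h k) \<in> F"
proof -
  have "\<forall>k\<in>K. h k \<in> F" using assms(2) by blast
  thus ?thesis using sum_in_aux[OF assms(1), of K h] by (rule mp[rotated])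
qed

lemma act_sum_right_aux:
  assumes "left_module_on act F"
  shows "(\<forall>k\<in>K. h k \<in> F) \<longrightarrow> act a (sum h K) = (\<Sum>k\<in>K. act a (h k))"
proof (induction K rule: infinite_finite_induct)
  case (infinite A) then show ?case using act_zero_right[OF assms(1) lm_zero[OF assms(1)]] by simp
next
  case empty then show ?case using act_zero_right[OF assms(1) lm_zero[OF assms(1)]] by simp
next
  case (insert x A)
  show ?case
  proof
    assume H: "\<forall>k\<in>insert x A. h k \<in> F"
    hence "\<forall>k\<in>A. h k \<in> F" by blast
    hence s: "sum h A \<in> F" using sum_in_aux[OF assms(1), of A h] by (rule mp[rotated])
    have hx: "h x \<in> F" using H by blast
    have IH: "act a (sum h A) = (\<Sum>k\<in>A. act a (h k))" using insert.IH H by blast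
    have "act a (sum h (insert x A)) = act a (h x + sum h A)" using insert.hyps by simp
    also have "\<dots> = act a (h x) + act a (sum h A)" by (rule lm_rdist[OF assms(1) hx s])
    also have "\<dots> = (\<Sum>k\<in>insert x A. act a (h k))" using IH insert.hyps by simp
    finally show "act a (sum h (insert x A)) = (\<Sum>k\<in>insert x A. act a (h k))" .
  qed
qed

lemma act_sum_right:
  assumes "left_module_on act F" "\<And>k. k \<in> K \<Longrightarrow> h k \<in> F"
  shows "act a (\<Sum>k\<in>K. h k) = (\<Sum>k\<in>K. act a (h k))"
proof -
  have "\<forall>k\<in>K. h k \<in> F" using assms(2) by blast
  thus ?thesis using act_sum_right_aux[OF assms(1), of K h a] by (rule mp[rotated])
qed

lemma main_incl:
  assumes M: "left_module_on act F"
    and rs: "row_span R r m = rowvecs m \<inter> (\<Inter>i\<in>{..<N}. kappa_ker act m (\<omega> i))"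
    and ann: "\<forall>i<N. \<forall>l<r'. (\<Sum>j<m. act (R' l j) (\<omega> i j)) = 0"
  shows "behavior act F m R r \<subseteq> behavior act F m R' r'"
proof
  fix g assume g: "g \<in> behavior act F m R r"
  hence gv: "g \<in> vecs_in F m" and gR: "\<forall>i<r. (\<Sum>j<m. act (R i j) (g j)) = 0"
    unfolding behavior_def by auto
  have gF: "\<And>j. j < m \<Longrightarrow> g j \<in> F" using gv unfolding vecs_in_def by auto
  have "(\<Sum>j<m. act (R' l j) (g j)) = 0" if l: "l < r'" for l
  proof -
    define v where "v = (\<lambda>j. if j < m then R' l j else 0)"
    have vr: "v \<in> rowvecs m" unfolding v_def rowvecs_def by auto
    have "v \<in> kappa_ker act m (\<omega> i)" if "i < N" for i
      using vr ann that l unfolding kappa_ker_def v_def by auto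
    hence "v \<in> row_span R r m" using rs vr by auto
    then obtain c where c: "\<forall>j<m. v j = (\<Sum>k<r. c k * R k j)"
      unfolding row_span_def by auto
    have "(\<Sum>j<m. act (R' l j) (g j)) = (\<Sum>j<m. \<Sum>k<r. act (c k) (act (R k j) (g j)))"
    proof (rule sum.cong[OF refl])
      fix j assume j: "j \<in> {..<m}"
      have "act (R' l j) (g j) = act (\<Sum>k<r. c k * R k j) (g j)"
        using c j unfolding v_def by auto
      also have "\<dots> = (\<Sum>k<r. act (c k * R k j) (g j))"
        using act_sum_left[OF M gF] j by auto
      also have "\<dots> = (\<Sum>k<r. act (c k) (act (R k j) (g j)))"
        using lm_mult[OF M gF] j by auto
      finally show "act (R' l j) (g j) = (\<Sum>k<r. act (c k) (act (R k j) (g j)))" .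
    qed
    also have "\<dots> = (\<Sum>k<r. \<Sum>j<m. act (c k) (act (R k j) (g j)))"
      by (rule sum.swap)
    also have "\<dots> = (\<Sum>k<r. act (c k) (\<Sum>j<m. act (R k j) (g j)))"
    proof (rule sum.cong[OF refl])
      fix k
      have hF: "\<And>j. j \<in> {..<m} \<Longrightarrow> act (R k j) (g j) \<in> F"
        using lm_act[OF M gF] by auto
      show "(\<Sum>j<m. act (c k) (act (R k j) (g j))) = act (c k) (\<Sum>j<m. act (R k j) (g j))"
        using act_sum_right[OF M, where K="{..<m}" and h="\<lambda>j. act (R k j) (g j)" and a="c k"] hF by simp
    qed
    also have "\<dots> = 0"
    proof (rule sum.neutral, rule ballI)
      fix k assume "k \<in> {..<r}"
      hence "(\<Sum>j<m. act (R k j) (g j)) = 0" using gR by blast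
      thus "act (c k) (\<Sum>j<m. act (R k j) (g j)) = 0" using act_zero_right[OF M lm_zero[OF M]] by metis
    qed
    finally show ?thesis .
  qed
  hence "\<forall>l<r'. (\<Sum>j<m. act (R' l j) (g j)) = 0" by blast
  thus "g \<in> behavior act F m R' r'" using gv unfolding behavior_def by blast
qed

theorem theorem4p5:
  fixes act :: "'o::ring_1 \<Rightarrow> 'f::ab_group_add \<Rightarrow> 'f"
    and F A :: "'f set"
    and m N r :: nat
    and \<omega> :: "nat \<Rightarrow> nat \<Rightarrow> 'f"
    and R :: "nat \<Rightarrow> nat \<Rightarrow> 'o"
  assumes "left_module_on act F"
    and "submodule_on act A F"
    and "\<forall>i<N. \<omega> i \<in> vecs_in A m"
    and "row_span R r m = rowvecs m \<inter> (\<Inter>i\<in>{..<N}. kappa_ker act m (\<omega> i))"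
  shows "is_VMPUM act F m (behavior act F m R r) (\<omega> ` {..<N}) \<and>
         (\<forall>R' r'. (\<forall>i<N. \<forall>l<r'. (\<Sum>j<m. act (R' l j) (\<omega> i j)) = 0) \<longrightarrow>
            behavior act F m R r \<subseteq> behavior act F m R' r')"
proof -
  note M = assms(1) and rs = assms(4)
  have part2: "\<forall>R' r'. (\<forall>i<N. \<forall>l<r'. (\<Sum>j<m. act (R' l j) (\<omega> i j)) = 0) \<longrightarrow>
            behavior act F m R r \<subseteq> behavior act F m R' r'"
  proof (intro allI impI)
    fix R' :: "nat \<Rightarrow> nat \<Rightarrow> 'o" and r' :: nat assume "\<forall>i<N. \<forall>l<r'. (\<Sum>j<m. act (R' l j) (\<omega> i j)) = 0"
    thus "behavior act F m R r \<subseteq> behavior act F m R' r'" by (rule main_incl[OF M rs])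
  qed
  have rowsR: "(\<Sum>j<m. act (R k j) (\<omega> i j)) = 0" if k: "k < r" and i: "i < N" for k i
  proof -
    define v where "v = (\<lambda>j. if j < m then R k j else 0)"
    have v0: "\<forall>j\<ge>m. v j = 0" unfolding v_def by auto
    have vc: "\<forall>j<m. v j = (\<Sum>k'<r. (if k' = k then 1 else 0) * R k' j)"
    proof (intro allI impI)
      fix j assume "j < m"
      have "(\<Sum>k'<r. (if k' = k then 1 else 0) * R k' j) = (\<Sum>k'<r. if k' = k then R k' j else 0)"
        by (rule sum.cong) simp_all
      also have "\<dots> = R k j" using k by (simp add: sum.delta)
      finally have "(\<Sum>k'<r. (if k' = k then 1 else 0) * R k' j) = R k j" .
      thus "v j = (\<Sum>k'<r. (if k' = k then 1 else 0) * R k' j)" using \<open>j<m\<close> unfolding v_def by simp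
    qed
    have vr: "v \<in> rowvecs m" unfolding rowvecs_def mem_Collect_eq by (rule v0)
    have "v \<in> row_span R r m" unfolding row_span_def
      by (rule CollectI, rule conjI, rule vr, rule exI, rule vc)
    hence "v \<in> rowvecs m \<inter> (\<Inter>i\<in>{..<N}. kappa_ker act m (\<omega> i))" unfolding rs .
    hence "v \<in> kappa_ker act m (\<omega> i)" using i by blast
    hence "(\<Sum>j<m. act (v j) (\<omega> i j)) = 0" unfolding kappa_ker_def by blast
    moreover have "(\<Sum>j<m. act (v j) (\<omega> i j)) = (\<Sum>j<m. act (R k j) (\<omega> i j))"
      by (rule sum.cong) (simp_all add: v_def)
    ultimately show ?thesis by simp
  qed
  have sub: "\<omega> ` {..<N} \<subseteq> behavior act F m R r"
  proof
    fix x assume "x \<in> \<omega> ` {..<N}"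
    then obtain i where i: "i < N" and x: "x = \<omega> i" by auto
    have AF: "A \<subseteq> F" using assms(2) unfolding submodule_on_def by (elim conjE)
    have wA: "\<omega> i \<in> vecs_in A m" using assms(3) i by blast
    have "\<omega> i \<in> vecs_in F m" using wA AF unfolding vecs_in_def by blast
    moreover have "\<forall>k<r. (\<Sum>j<m. act (R k j) (\<omega> i j)) = 0" using rowsR i by blast
    ultimately have "\<omega> i \<in> behavior act F m R r" unfolding behavior_def by blast
    thus "x \<in> behavior act F m R r" using x by simp
  qed
  have minimal: "behavior act F m R r \<subseteq> B'"
    if hb: "is_behavior act F m B'" and hs: "\<omega> ` {..<N} \<subseteq> B'" for B'
  proof -
    obtain R' r' where B': "B' = behavior act F m R' r'" using hb unfolding is_behavior_def by blast
    have "\<forall>i<N. \<forall>l<r'. (\<Sum>j<m. act (R' l j) (\<omega> i j)) = 0"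
    proof (intro allI impI)
      fix i l assume "i < N" "l < r'"
      hence "\<omega> i \<in> behavior act F m R' r'" using hs B' by blast
      thus "(\<Sum>j<m. act (R' l j) (\<omega> i j)) = 0" using \<open>l < r'\<close> unfolding behavior_def by blast
    qed
    hence "behavior act F m R r \<subseteq> behavior act F m R' r'" by (rule mp[OF spec[OF spec[OF part2]]])
    thus ?thesis using B' by simp
  qed
  have isb: "is_behavior act F m (behavior act F m R r)" unfolding is_behavior_def by blast
  have "is_VMPUM act F m (behavior act F m R r) (\<omega> ` {..<N})"
    unfolding is_VMPUM_def
  proof (intro conjI allI impI)
    show "is_behavior act F m (behavior act F m R r)" by (rule isb)
    show "\<omega> ` {..<N} \<subseteq> behavior act F m R r" by (rule sub)
    fix B' assume "is_behavior act F m B' \<and> \<omega> ` {..<N} \<subseteq> B'"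
    thus "behavior act F m R r \<subseteq> B'" using minimal by blast
  qed
  thus ?thesis using part2 by (rule conjI)
qed

end
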